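(* Let $N_i\ge1$ and, for $j=1,\ldots,N_i$, let $\lambda_{ij}>0$ and $\delta_{ij}\ge0$ with $\lambda_{ij}\delta_{ij}<1$; let $\Delta_i=\sum_{j=1}^{N_i}\delta_{ij}>0$. Consider a CTMC fragment consisting of states $z_{i1},\ldots,z_{ik_i}$ followed by states $s'_{i1},\ldots,s'_{iN_i}$, in which $z_{il}$ transitions to $z_{i,l+1}$ ($l<k_i$) and $z_{ik_i}$ transitions to $s'_{i1}$, each with rate $\lambda_i^E$, and $s'_{ij}$ is left with total rate $\lambda'_{ij}$ (to $s'_{i,j+1}$ for $j<N_i$). Let $\epsilon\in(0,1)$. If $k_i$, $\lambda_i^E$ and $\lambda'_{i1},\ldots,\lambda'_{iN_i}$ satisfy, for some $p\in(0,1)$, (a) $1-\sum_{l=0}^{k_i-1}\frac{(k_i(1-\epsilon))^l e^{-k_i(1-\epsilon)}}{l!}=p$, (b) $\lambda_i^E=k_i/\Delta_i$, (c) $\lambda'_{ij}=\frac{\lambda_{ij}}{1-\lambda_{ij}\delta_{ij}}$ for all $j\in\{1,\ldots,N_i\}$, then: (i) the probability that the CTMC leaves state $z_{ik_i}$ within $\Delta_i(1-\epsilon)$ time units from entering state $z_{i1}$ is $p$; (ii) the expected time for the CTMC to leave $s'_{iN_i}$ after entering $z_{i1}$ is $\sum_{j=1}^{N_i}\lambda_{ij}^{-1}$, which equals the expected time to traverse a sequence of states $s_{i1},\ldots,s_{iN_i}$ with exponential sojourn times of rates $\lambda_{i1},\ldots,\lambda_{iN_i}$.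
   Context: In the paper, $\lambda_{ij}$ is the reciprocal of the mean of the observed execution times of the component associated with high-level CTMC state $s_{ij}$, and $\delta_{ij}$ (its delay) is the minimum observed execution time of that component; the states $s_{i1},\ldots,s_{iN_i}$ form a sequence of high-level states always traversed consecutively, and $\Delta_i$ is their joint delay. The states $z_{i1},\ldots,z_{ik_i}$ encode an Erlang-$k_i$ distribution with rate $\lambda_i^E$ (CDF $F(k,\lambda,x)=1-\sum_{l=0}^{k-1}\frac{(\lambda x)^l}{l!}e^{-\lambda x}$). *)

theory Defs
  imports "HOL-Probability.Probability"
begin

end

theory Submission
  imports Defs
begin

lemma (in prob_space) indep_vars_Inl:
  fixes X :: "'i \<Rightarrow> 'a \<Rightarrow> real" and Y :: "'j \<Rightarrow> 'a \<Rightarrow> real"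
  assumes "indep_vars (\<lambda>_. borel) (case_sum X Y) (I <+> J)"
  shows "indep_vars (\<lambda>_. borel) X I"
proof -
  have sub: "indep_vars (\<lambda>_. borel) (case_sum X Y) (Inl ` I)"
    by (rule indep_vars_subset[OF assms]) (auto simp: Plus_def)
  then have rv: "\<forall>i\<in>I. random_variable borel (X i)"
   and ind: "indep_sets (\<lambda>i. {case_sum X Y i -` A \<inter> space M | A. A \<in> sets borel}) (Inl ` I)"
    unfolding indep_vars_def2 by auto
  have "indep_sets (\<lambda>i. {X i -` A \<inter> space M | A. A \<in> sets borel}) I"
    unfolding indep_sets_def
  proof (intro conjI ballI allI impI)
    fix i assume "i \<in> I"
    then show "{X i -` A \<inter> space M | A. A \<in> sets borel} \<subseteq> events"
      using ind unfolding indep_sets_def by fastforce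
  next
    fix K A assume K: "K \<subseteq> I" "K \<noteq> {}" "finite K"
      and A: "A \<in> (\<Pi> j\<in>K. {X j -` A \<inter> space M | A. A \<in> sets borel})"
    have "prob (\<Inter>j\<in>(Inl ` K :: ('i + 'j) set). A (projl j)) = (\<Prod>j\<in>(Inl ` K :: ('i + 'j) set). prob (A (projl j)))"
      using ind K A unfolding indep_sets_def
      apply (elim conjE)
      apply (drule spec[of _ "Inl ` K"])
      apply (drule mp, blast)
      apply (drule mp, simp)
      apply (drule mp, simp)
      apply (drule bspec[of _ _ "\<lambda>j. A (projl j)"])
       apply (force simp: Pi_iff)
      apply (simp add: image_image)
      done
    then show "prob (\<Inter>j\<in>K. A j) = (\<Prod>j\<in>K. prob (A j))"
      by (simp add: prod.reindex image_image)
  qed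
  then show ?thesis unfolding indep_vars_def2 using rv by auto
qed

theorem theorem4:
  fixes M :: "'a measure"
    and N k :: nat
    and lam del lam' :: "nat \<Rightarrow> real"
    and Delta lamE eps p :: real
    and Z S' U :: "nat \<Rightarrow> 'a \<Rightarrow> real"
  assumes "prob_space M"
    and N_pos: "N \<ge> 1"
    and k_pos: "k \<ge> 1"
    and lam_pos: "\<And>j. j \<in> {1..N} \<Longrightarrow> lam j > 0"
    and del_nn: "\<And>j. j \<in> {1..N} \<Longrightarrow> del j \<ge> 0"
    and lamdel: "\<And>j. j \<in> {1..N} \<Longrightarrow> lam j * del j < 1"
    and Delta_def: "Delta = (\<Sum>j=1..N. del j)"
    and Delta_pos: "Delta > 0"
    and eps: "0 < eps" "eps < 1"
    and p: "0 < p" "p < 1"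
    and cond_a: "1 - (\<Sum>l<k. (real k * (1 - eps)) ^ l * exp (- (real k * (1 - eps))) / fact l) = p"
    and cond_b: "lamE = real k / Delta"
    and cond_c: "\<And>j. j \<in> {1..N} \<Longrightarrow> lam' j = lam j / (1 - lam j * del j)"
    \<comment> \<open>sojourn times of the CTMC fragment z_1..z_k, s'_1..s'_N: independent exponentials\<close>
    and Z_distr: "\<And>l. l \<in> {1..k} \<Longrightarrow> distributed M lborel (Z l) (exponential_density lamE)"
    and S'_distr: "\<And>j. j \<in> {1..N} \<Longrightarrow> distributed M lborel (S' j) (exponential_density (lam' j))"
    and indep: "prob_space.indep_vars M (\<lambda>_. borel) (case_sum Z S') ({1..k} <+> {1..N})"
    \<comment> \<open>sojourn times of the original sequence s_1..s_N: independent exponentials with rates lam j\<close>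
    and U_distr: "\<And>j. j \<in> {1..N} \<Longrightarrow> distributed M lborel (U j) (exponential_density (lam j))"
    and U_indep: "prob_space.indep_vars M (\<lambda>_. borel) U {1..N}"
  shows "measure M {\<omega> \<in> space M. (\<Sum>l=1..k. Z l \<omega>) \<le> Delta * (1 - eps)} = p
     \<and> prob_space.expectation M (\<lambda>\<omega>. (\<Sum>l=1..k. Z l \<omega>) + (\<Sum>j=1..N. S' j \<omega>)) = (\<Sum>j=1..N. 1 / lam j)
     \<and> prob_space.expectation M (\<lambda>\<omega>. \<Sum>j=1..N. U j \<omega>) = (\<Sum>j=1..N. 1 / lam j)"
proof -
  interpret prob_space M by fact
  have lamE_pos: "lamE > 0" using cond_b k_pos Delta_pos by simp
  have lam'_pos: "lam' j > 0" if "j \<in> {1..N}" for j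
    using cond_c[OF that] lam_pos[OF that] lamdel[OF that] by simp
  have indZ: "indep_vars (\<lambda>_. borel) Z {1..k}"
    by (rule indep_vars_Inl[OF indep])
  have D: "distributed M lborel (\<lambda>x. \<Sum>l\<in>{1..k}. Z l x) (erlang_density (card {1..k} - 1) lamE)"
    by (rule exponential_distributed_sum[OF _ _ lamE_pos Z_distr indZ]) (use k_pos in auto)
  have a_nn: "0 \<le> Delta * (1 - eps)" using Delta_pos eps by simp
  have P1: "measure M {\<omega> \<in> space M. (\<Sum>l=1..k. Z l \<omega>) \<le> Delta * (1 - eps)} = erlang_CDF (k - 1) lamE (Delta * (1 - eps))"
    using erlang_distributed_le[OF D lamE_pos a_nn] by simp
  have prod: "lamE * (Delta * (1 - eps)) = real k * (1 - eps)"
    using cond_b Delta_pos by (simp add: field_simps)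
  have kset: "{..k - 1} = {..<k}" using k_pos by auto
  have part1: "measure M {\<omega> \<in> space M. (\<Sum>l=1..k. Z l \<omega>) \<le> Delta * (1 - eps)} = p"
  proof -
    have pr: "lamE * Delta * (1 - eps) = real k * (1 - eps)" using prod by (simp add: mult.assoc)
    have ks: "{..k - Suc 0} = {..<k}" using k_pos by auto
    show ?thesis using a_nn cond_a unfolding P1 erlang_CDF_def by (simp add: pr ks prod)
  qed
  have intZ: "integrable M (Z l)" if "l \<in> {1..k}" for l
    using erlang_ith_moment_integrable[OF lamE_pos Z_distr[OF that], of 1] by simp
  have intS: "integrable M (S' j)" if "j \<in> {1..N}" for j
    using erlang_ith_moment_integrable[OF lam'_pos[OF that] S'_distr[OF that], of 1] by simp
  have intU: "integrable M (U j)" if "j \<in> {1..N}" for j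
    using erlang_ith_moment_integrable[OF lam_pos[OF that] U_distr[OF that], of 1] by simp
  have EZ: "expectation (\<lambda>\<omega>. \<Sum>l=1..k. Z l \<omega>) = (\<Sum>l=1..k. 1 / lamE)"
    using intZ exponential_distributed_expectation[OF lamE_pos Z_distr]
    by (simp add: Bochner_Integration.integral_sum)
  have EZ': "(\<Sum>l=1..k. 1 / lamE) = Delta" using cond_b Delta_pos k_pos by simp
  have ES: "expectation (\<lambda>\<omega>. \<Sum>j=1..N. S' j \<omega>) = (\<Sum>j=1..N. 1 / lam' j)"
    using intS exponential_distributed_expectation[OF lam'_pos S'_distr]
    by (simp add: Bochner_Integration.integral_sum)
  have inv: "1 / lam' j = 1 / lam j - del j" if "j \<in> {1..N}" for j
  proof -
    have "1 - lam j * del j > 0" using lamdel[OF that] by simp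
    then have "1 / lam' j = (1 - lam j * del j) / lam j" using cond_c[OF that] by simp
    also have "\<dots> = 1 / lam j - del j" using lam_pos[OF that] by (simp add: field_simps)
    finally show ?thesis .
  qed
  have ES': "(\<Sum>j=1..N. 1 / lam' j) = (\<Sum>j=1..N. 1 / lam j) - Delta"
    using inv by (simp add: Delta_def sum_subtractf)
  have part2: "expectation (\<lambda>\<omega>. (\<Sum>l=1..k. Z l \<omega>) + (\<Sum>j=1..N. S' j \<omega>)) = (\<Sum>j=1..N. 1 / lam j)"
    using intZ intS EZ EZ' ES ES'
    by (subst Bochner_Integration.integral_add) auto
  have part3: "expectation (\<lambda>\<omega>. \<Sum>j=1..N. U j \<omega>) = (\<Sum>j=1..N. 1 / lam j)"
    using intU exponential_distributed_expectation[OF lam_pos U_distr]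
    by (simp add: Bochner_Integration.integral_sum)
  show ?thesis using part1 part2 part3 by simp
qed

end
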